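(* In the category $\mathcal H'$ described in the context, for every integer $k\ge1$ the following equality holds in $\mathrm{End}_{\mathcal H'}(\mathbf 1)$: \[\tilde c_{k+1}=\sum_{a=0}^{k-1}\tilde c_a\, c_{k-1-a}.\]
   Context: Let $\Bbbk$ be a commutative ring. The category $\mathcal{H}'$ is the $\Bbbk$-linear additive strict monoidal category defined as follows. For a finite sign sequence $\epsilon=\epsilon_1\cdots\epsilon_m$ there is an object $Q_\epsilon=Q_{\epsilon_1}\otimes\cdots\otimes Q_{\epsilon_m}$, $Q_\epsilon\otimes Q_{\epsilon'}=Q_{\epsilon\epsilon'}$, unit $\mathbf 1=Q_\emptyset$; general objects are finite formal direct sums. $\mathrm{Hom}(Q_\epsilon,Q_{\epsilon'})$ ($\epsilon$ of length $m$, $\epsilon'$ of length $k$) is the $\Bbbk$-module spanned by planar diagrams: compact oriented $1$-manifolds immersed in $\mathbb R\times[0,1]$ with only transverse double points, boundary $\{1,\dots,m\}\times\{0\}\cup\{1,\dots,k\}\times\{1\}$, the strand pointing upward at the $i$-th lower (resp. $j$-th upper) endpoint iff $\epsilon_i=+$ (resp. $\epsilon'_j=+$); up to isotopy rel boundary and modulo local relations. Composition is stacking, $\otimes$ is juxtaposition. With $X\in\mathrm{End}(Q_{++})$ the crossing of two upward strands, $\mathrm{cup}_{+-}:\mathbf 1\to Q_{+-}$, $\mathrm{cup}_{-+}:\mathbf 1\to Q_{-+}$, $\mathrm{cap}_{+-}:Q_{+-}\to\mathbf 1$, $\mathrm{cap}_{-+}:Q_{-+}\to\mathbf 1$ the oriented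 U-turns, and $Y:Q_{+-}\to Q_{-+}$, $Y':Q_{-+}\to Q_{+-}$ the mixed crossings, the relations are: $X^2=\mathrm{id}$; braid relation for $X$ on $Q_{+++}$; $Y'Y=\mathrm{id}_{Q_{+-}}$; $YY'=\mathrm{id}_{Q_{-+}}-\mathrm{cup}_{-+}\mathrm{cap}_{-+}$; $\mathrm{cap}_{-+}\mathrm{cup}_{-+}=\mathrm{id}_{\mathbf 1}$; $(\mathrm{cap}_{-+}\otimes\mathrm{id}_{Q_+})(\mathrm{id}_{Q_-}\otimes X)(\mathrm{cup}_{-+}\otimes\mathrm{id}_{Q_+})=0$ (left curl is zero). The dot (right curl) is $x=(\mathrm{id}_{Q_+}\otimes\mathrm{cap}_{+-})(X\otimes\mathrm{id}_{Q_-})(\mathrm{id}_{Q_+}\otimes\mathrm{cup}_{+-})\in\mathrm{End}(Q_+)$. The clockwise circle with $k$ dots is $c_k=\mathrm{cap}_{+-}\circ(x^k\otimes\mathrm{id}_{Q_-})\circ\mathrm{cup}_{+-}$ and the counterclockwise circle with $k$ dots is $\tilde c_k=\mathrm{cap}_{-+}\circ(\mathrm{id}_{Q_-}\otimes x^k)\circ\mathrm{cup}_{-+}$, both in the commutative algebra $\mathrm{End}_{\mathcal H'}(\mathbf 1)$, whose product is composition. *)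

theory Defs
  imports Main
begin

text \<open>A presentation of the diagrammatic category H' as the free strict monoidal
  k-linear category on objects Q_+ , Q_- and the generating morphisms X, cups and caps,
  modulo planar isotopy (zigzag relations and cyclicity of the crossing) and the
  local relations of the paper.\<close>

datatype sgn = Pos | Neg

fun dual :: "sgn \<Rightarrow> sgn" where
  "dual Pos = Neg" | "dual Neg = Pos"

datatype 'k tm =
    Id "sgn list"
  | Xg                    \<comment> \<open>upward crossing, Q_{++} to Q_{++}\<close>
  | CupPM
  | CupMP
  | CapPM
  | CapMP
  | Cmp "'k tm" "'k tm"   \<comment> \<open>Cmp f g = f after g\<close>
  | Tns "'k tm" "'k tm"
  | Zr "sgn list" "sgn list"
  | Pls "'k tm" "'k tm"
  | Sm 'k "'k tm"

text \<open>mty f = Some (source, target)\<close>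
fun mty :: "'k tm \<Rightarrow> (sgn list \<times> sgn list) option" where
  "mty (Id s) = Some (s, s)"
| "mty Xg = Some ([Pos,Pos], [Pos,Pos])"
| "mty CupPM = Some ([], [Pos,Neg])"
| "mty CupMP = Some ([], [Neg,Pos])"
| "mty CapPM = Some ([Pos,Neg], [])"
| "mty CapMP = Some ([Neg,Pos], [])"
| "mty (Cmp f g) = (case (mty f, mty g) of
      (Some (b, c), Some (a, b')) \<Rightarrow> (if b' = b then Some (a, c) else None)
    | _ \<Rightarrow> None)"
| "mty (Tns f g) = (case (mty f, mty g) of
      (Some (a, b), Some (c, d)) \<Rightarrow> Some (a @ c, b @ d)
    | _ \<Rightarrow> None)"
| "mty (Zr a b) = Some (a, b)"
| "mty (Pls f g) = (if mty f = mty g then mty f else None)"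
| "mty (Sm r f) = mty f"

fun cup :: "sgn \<Rightarrow> 'k tm" where
  "cup Pos = CupMP" | "cup Neg = CupPM"
fun cap :: "sgn \<Rightarrow> 'k tm" where
  "cap Pos = CapPM" | "cap Neg = CapMP"

text \<open>Rotations (by isotopy) of a morphism f : Q_{ab} to Q_{cd}.
  rotL f : Q_{b, dual d} to Q_{dual a, c};  rotR f : Q_{dual c, a} to Q_{d, dual b}.\<close>
definition rotL :: "sgn \<Rightarrow> sgn \<Rightarrow> sgn \<Rightarrow> sgn \<Rightarrow> 'k tm \<Rightarrow> 'k tm" where
  "rotL a b c d f =
     Cmp (Tns (Id [dual a, c]) (cap d))
       (Cmp (Tns (Tns (Id [dual a]) f) (Id [dual d]))
            (Tns (cup a) (Id [b, dual d])))"

definition rotR :: "sgn \<Rightarrow> sgn \<Rightarrow> sgn \<Rightarrow> sgn \<Rightarrow> 'k tm \<Rightarrow> 'k tm" where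
  "rotR a b c d f =
     Cmp (Tns (cap (dual c)) (Id [d, dual b]))
       (Cmp (Tns (Tns (Id [dual c]) f) (Id [dual b]))
            (Tns (Id [dual c, a]) (cup (dual b))))"

definition Yg :: "'k tm" where "Yg = rotL Pos Pos Pos Pos Xg"
definition Yg' :: "'k tm" where "Yg' = rotR Pos Pos Pos Pos Xg"

text \<open>Generating equations (typing is imposed in heq).\<close>
inductive ax :: "'k::comm_ring_1 tm \<Rightarrow> 'k tm \<Rightarrow> bool" where
  add_comm: "ax (Pls f g) (Pls g f)"
| add_assoc: "ax (Pls (Pls f g) h) (Pls f (Pls g h))"
| add_zero: "ax (Pls f (Zr a b)) f"
| add_neg: "ax (Pls f (Sm (-1) f)) (Zr a b)"
| sm_distl: "ax (Sm r (Pls f g)) (Pls (Sm r f) (Sm r g))"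
| sm_distr: "ax (Sm (r + s) f) (Pls (Sm r f) (Sm s f))"
| sm_assoc: "ax (Sm (r * s) f) (Sm r (Sm s f))"
| sm_one: "ax (Sm 1 f) f"
| id_left: "ax (Cmp (Id b) f) f"
| id_right: "ax (Cmp f (Id a)) f"
| cmp_assoc: "ax (Cmp (Cmp f g) h) (Cmp f (Cmp g h))"
| cmp_pls_l: "ax (Cmp (Pls f g) h) (Pls (Cmp f h) (Cmp g h))"
| cmp_pls_r: "ax (Cmp f (Pls g h)) (Pls (Cmp f g) (Cmp f h))"
| cmp_sm_l: "ax (Cmp (Sm r f) g) (Sm r (Cmp f g))"
| cmp_sm_r: "ax (Cmp f (Sm r g)) (Sm r (Cmp f g))"
| tns_assoc: "ax (Tns (Tns f g) h) (Tns f (Tns g h))"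
| tns_unit_l: "ax (Tns (Id []) f) f"
| tns_unit_r: "ax (Tns f (Id [])) f"
| tns_id: "ax (Tns (Id a) (Id b)) (Id (a @ b))"
| interchange: "ax (Cmp (Tns f g) (Tns f' g')) (Tns (Cmp f f') (Cmp g g'))"
| tns_pls_l: "ax (Tns (Pls f g) h) (Pls (Tns f h) (Tns g h))"
| tns_pls_r: "ax (Tns f (Pls g h)) (Pls (Tns f g) (Tns f h))"
| tns_sm_l: "ax (Tns (Sm r f) g) (Sm r (Tns f g))"
| tns_sm_r: "ax (Tns f (Sm r g)) (Sm r (Tns f g))"
| zz1: "ax (Cmp (Tns CapPM (Id [Pos])) (Tns (Id [Pos]) CupMP)) (Id [Pos])"
| zz2: "ax (Cmp (Tns (Id [Pos]) CapMP) (Tns CupPM (Id [Pos]))) (Id [Pos])"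
| zz3: "ax (Cmp (Tns CapMP (Id [Neg])) (Tns (Id [Neg]) CupPM)) (Id [Neg])"
| zz4: "ax (Cmp (Tns (Id [Neg]) CapPM) (Tns CupMP (Id [Neg]))) (Id [Neg])"
  \<comment> \<open>planar isotopy: cyclicity of the crossing (downward crossing well defined)\<close>
| pivotal: "ax (rotL Pos Neg Neg Pos Yg) (rotR Neg Pos Pos Neg Yg')"
| X_sq: "ax (Cmp Xg Xg) (Id [Pos,Pos])"
| braid: "ax (Cmp (Tns Xg (Id [Pos])) (Cmp (Tns (Id [Pos]) Xg) (Tns Xg (Id [Pos]))))
             (Cmp (Tns (Id [Pos]) Xg) (Cmp (Tns Xg (Id [Pos])) (Tns (Id [Pos]) Xg)))"
| YY1: "ax (Cmp Yg' Yg) (Id [Pos,Neg])"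
| YY2: "ax (Cmp Yg Yg') (Pls (Id [Neg,Pos]) (Sm (-1) (Cmp CupMP CapMP)))"
| circ: "ax (Cmp CapMP CupMP) (Id [])"
| left_curl: "ax (Cmp (Tns CapMP (Id [Pos])) (Cmp (Tns (Id [Neg]) Xg) (Tns CupMP (Id [Pos]))))
               (Zr [Pos] [Pos])"

inductive heq :: "'k::comm_ring_1 tm \<Rightarrow> 'k tm \<Rightarrow> bool" where
  heq_ax: "ax f g \<Longrightarrow> mty f \<noteq> None \<Longrightarrow> mty g = mty f \<Longrightarrow> heq f g"
| heq_refl: "mty f \<noteq> None \<Longrightarrow> heq f f"
| heq_sym: "heq f g \<Longrightarrow> heq g f"
| heq_trans: "heq f g \<Longrightarrow> heq g h \<Longrightarrow> heq f h"
| heq_cmp: "heq f f' \<Longrightarrow> heq g g' \<Longrightarrow> mty (Cmp f g) \<noteq> None \<Longrightarrow> heq (Cmp f g) (Cmp f' g')"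
| heq_tns: "heq f f' \<Longrightarrow> heq g g' \<Longrightarrow> heq (Tns f g) (Tns f' g')"
| heq_pls: "heq f f' \<Longrightarrow> heq g g' \<Longrightarrow> mty (Pls f g) \<noteq> None \<Longrightarrow> heq (Pls f g) (Pls f' g')"
| heq_sm: "heq f f' \<Longrightarrow> heq (Sm r f) (Sm r f')"

definition dot :: "'k tm" where
  "dot = Cmp (Tns (Id [Pos]) CapPM) (Cmp (Tns Xg (Id [Neg])) (Tns (Id [Pos]) CupPM))"

fun dotpow :: "nat \<Rightarrow> 'k tm" where
  "dotpow 0 = Id [Pos]"
| "dotpow (Suc n) = Cmp dot (dotpow n)"

definition cw :: "nat \<Rightarrow> 'k tm" where
  "cw k = Cmp CapPM (Cmp (Tns (dotpow k) (Id [Neg])) CupPM)"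

definition ccw :: "nat \<Rightarrow> 'k tm" where
  "ccw k = Cmp CapMP (Cmp (Tns (Id [Neg]) (dotpow k)) CupMP)"

definition tsum :: "sgn list \<Rightarrow> sgn list \<Rightarrow> 'k tm list \<Rightarrow> 'k tm" where
  "tsum a b fs = foldr Pls fs (Zr a b)"

end

theory Submission
  imports Defs
begin

lemma heq_typed: "heq f g \<Longrightarrow> mty f \<noteq> None \<and> mty g = mty f"
proof (induction rule: heq.induct)
  case (heq_tns f f' g g')
  then show ?case by (auto split: option.splits)
qed auto

definition R :: "'k::comm_ring_1 tm \<Rightarrow> 'k tm \<Rightarrow> bool" where
  "R f g \<longleftrightarrow> heq f g \<or> (mty f = None \<and> mty g = None)"

lemma R_equivp: "equivp (R :: 'k::comm_ring_1 tm \<Rightarrow> 'k tm \<Rightarrow> bool)"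
proof (rule equivpI)
  show "reflp (R :: 'k tm \<Rightarrow> 'k tm \<Rightarrow> bool)"
    by (auto simp: reflp_def R_def intro: heq_refl)
  show "symp (R :: 'k tm \<Rightarrow> 'k tm \<Rightarrow> bool)"
    by (auto simp: symp_def R_def intro: heq_sym)
  show "transp (R :: 'k tm \<Rightarrow> 'k tm \<Rightarrow> bool)"
    unfolding transp_def R_def by (metis heq_trans heq_typed)
qed

quotient_type (overloaded) 'k mor = "'k::comm_ring_1 tm" / R
  by (rule R_equivp)

lift_definition cmp :: "'k::comm_ring_1 mor \<Rightarrow> 'k mor \<Rightarrow> 'k mor" (infixr "\<odot>" 55) is Cmp
proof -
  fix f f' g g' :: "'k tm"
  assume a: "R f f'" "R g g'"
  show "R (Cmp f g) (Cmp f' g')"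
  proof (cases "heq f f' \<and> heq g g'")
    case True
    then have "mty f' = mty f" "mty g' = mty g" using heq_typed by blast+
    then have "mty (Cmp f' g') = mty (Cmp f g)" by simp
    then show ?thesis using True unfolding R_def
      by (cases "mty (Cmp f g) = None") (auto intro: heq_cmp simp del: mty.simps)
  next
    case False
    then have "mty f = None \<and> mty f' = None \<or> mty g = None \<and> mty g' = None"
      using a unfolding R_def by blast
    then show ?thesis unfolding R_def by (auto split: option.splits)
  qed
qed

lift_definition tns :: "'k::comm_ring_1 mor \<Rightarrow> 'k mor \<Rightarrow> 'k mor" (infixr "\<otimes>" 60) is Tns
proof -
  fix f f' g g' :: "'k tm"
  assume a: "R f f'" "R g g'"
  show "R (Tns f g) (Tns f' g')"
  proof (cases "heq f f' \<and> heq g g'")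
    case True
    then show ?thesis unfolding R_def by (auto intro: heq_tns)
  next
    case False
    then have "mty f = None \<and> mty f' = None \<or> mty g = None \<and> mty g' = None"
      using a unfolding R_def by blast
    then show ?thesis unfolding R_def by (auto split: option.splits)
  qed
qed

lift_definition pls :: "'k::comm_ring_1 mor \<Rightarrow> 'k mor \<Rightarrow> 'k mor" (infixr "\<boxplus>" 52) is Pls
proof -
  fix f f' g g' :: "'k tm"
  assume a: "R f f'" "R g g'"
  show "R (Pls f g) (Pls f' g')"
  proof (cases "heq f f' \<and> heq g g'")
    case True
    then have "mty f' = mty f" "mty g' = mty g" using heq_typed by blast+
    then have "mty (Pls f' g') = mty (Pls f g)" by simp
    then show ?thesis using True unfolding R_def
      by (cases "mty (Pls f g) = None") (auto intro: heq_pls simp del: mty.simps)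
  next
    case False
    then have "mty f = None \<and> mty f' = None \<or> mty g = None \<and> mty g' = None"
      using a unfolding R_def by blast
    then show ?thesis unfolding R_def by auto
  qed
qed

lift_definition sm :: "'k::comm_ring_1 \<Rightarrow> 'k mor \<Rightarrow> 'k mor" is Sm
  unfolding R_def by (auto intro: heq_sm)

lift_definition ty :: "'k::comm_ring_1 mor \<Rightarrow> (sgn list \<times> sgn list) option" is mty
  unfolding R_def using heq_typed by fastforce


lemma axE: "ax f g \<Longrightarrow> mty g = mty f \<Longrightarrow> abs_mor f = abs_mor g"
  unfolding mor.abs_eq_iff R_def by (cases "mty f = None") (auto intro: heq_ax)

definition idm :: "sgn list \<Rightarrow> 'k::comm_ring_1 mor" where "idm s = abs_mor (Id s)"
definition zr :: "sgn list \<Rightarrow> sgn list \<Rightarrow> 'k::comm_ring_1 mor" where "zr a b = abs_mor (Zr a b)"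

lemma abs_push:
  "abs_mor (Cmp f g) = abs_mor f \<odot> abs_mor g"
  "abs_mor (Tns f g) = abs_mor f \<otimes> abs_mor g"
  "abs_mor (Pls f g) = abs_mor f \<boxplus> abs_mor g"
  "abs_mor (Sm r f) = sm r (abs_mor f)"
  "abs_mor (Id s) = idm s"
  "abs_mor (Zr a b) = zr a b"
  by (simp_all add: cmp.abs_eq tns.abs_eq pls.abs_eq sm.abs_eq idm_def zr_def)

lemma ty_abs[simp]: "ty (abs_mor f) = mty f" by (simp add: ty.abs_eq)

lemma ty_ops[simp]:
  "ty (a \<odot> b) = (case (ty a, ty b) of
      (Some (b, c), Some (a, b')) \<Rightarrow> (if b' = b then Some (a, c) else None)
    | _ \<Rightarrow> None)"
  "ty (a \<otimes> b) = (case (ty a, ty b) of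
      (Some (a, b), Some (c, d)) \<Rightarrow> Some (a @ c, b @ d)
    | _ \<Rightarrow> None)"
  "ty (a \<boxplus> b) = (if ty a = ty b then ty a else None)"
  "ty (sm r a) = ty a"
  "ty (idm s) = Some (s, s)"
  "ty (zr x y) = Some (x, y)"
  subgoal by transfer simp
  subgoal by transfer simp
  subgoal by transfer simp
  subgoal by transfer simp
  subgoal by (simp add: idm_def)
  subgoal by (simp add: zr_def)
  done

lemma cassoc: "(a \<odot> b) \<odot> c = a \<odot> (b \<odot> c)"
proof (induct a rule: mor.abs_induct)
  case (1 f) show ?case
  proof (induct b rule: mor.abs_induct)
    case (1 g) show ?case
    proof (induct c rule: mor.abs_induct)
      case (1 h) show ?case unfolding abs_push[symmetric]
        by (rule axE[OF ax.cmp_assoc]) (cases "mty f"; cases "mty g"; cases "mty h"; auto)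
    qed
  qed
qed

lemma axR: "ax f g \<Longrightarrow> mty g = mty f \<Longrightarrow> R f g"
  unfolding R_def by (cases "mty f = None") (auto intro: heq_ax)

lemma tassoc: "(a \<otimes> b) \<otimes> c = a \<otimes> (b \<otimes> c)"
  by transfer (rule axR[OF ax.tns_assoc], auto split: option.splits)

lemma tunitl[simp]: "idm [] \<otimes> a = a"
  unfolding idm_def by transfer (rule axR[OF ax.tns_unit_l], auto split: option.splits)

lemma tunitr[simp]: "a \<otimes> idm [] = a"
  unfolding idm_def by transfer (rule axR[OF ax.tns_unit_r], auto split: option.splits)

lemma tid: "idm a \<otimes> idm b = idm (a @ b)"
  unfolding idm_def by transfer (rule axR[OF ax.tns_id], auto)

lemma idl: "ty f = Some (x, y) \<Longrightarrow> idm y \<odot> f = f"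
  unfolding idm_def by transfer (rule axR[OF ax.id_left], auto)

lemma idr: "ty f = Some (x, y) \<Longrightarrow> f \<odot> idm x = f"
  unfolding idm_def by transfer (rule axR[OF ax.id_right], auto)

lemma inter: "ty f = Some (b1, c1) \<Longrightarrow> ty f' = Some (a1, b1) \<Longrightarrow> ty g = Some (b2, c2) \<Longrightarrow>
   ty g' = Some (a2, b2) \<Longrightarrow> (f \<otimes> g) \<odot> (f' \<otimes> g') = (f \<odot> f') \<otimes> (g \<odot> g')"
  by transfer (rule axR[OF ax.interchange], auto)

lemma pcomm: "a \<boxplus> b = b \<boxplus> a"
  by transfer (rule axR[OF ax.add_comm], auto)

lemma passoc: "(a \<boxplus> b) \<boxplus> c = a \<boxplus> (b \<boxplus> c)"
  by transfer (rule axR[OF ax.add_assoc], auto)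

lemma pzero: "ty a = Some (x, y) \<Longrightarrow> a \<boxplus> zr x y = a"
  unfolding zr_def by transfer (rule axR[OF ax.add_zero], auto)

lemma pneg: "ty a = Some (x, y) \<Longrightarrow> a \<boxplus> sm (-1) a = zr x y"
  unfolding zr_def by transfer (rule axR[OF ax.add_neg], auto)

lemma smdistr: "sm (r + s) a = sm r a \<boxplus> sm s a"
  by transfer (rule axR[OF ax.sm_distr], auto)

lemma smone[simp]: "sm 1 a = a"
  by transfer (rule axR[OF ax.sm_one], auto)

lemma smassoc: "sm (r * s) a = sm r (sm s a)"
  by transfer (rule axR[OF ax.sm_assoc], auto)

lemma cpl: "ty f = Some (b, c) \<Longrightarrow> ty g = Some (b, c) \<Longrightarrow> ty h = Some (a, b) \<Longrightarrow>
   (f \<boxplus> g) \<odot> h = f \<odot> h \<boxplus> g \<odot> h"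
  by transfer (rule axR[OF ax.cmp_pls_l], auto)

lemma cpr: "ty f = Some (b, c) \<Longrightarrow> ty g = Some (a, b) \<Longrightarrow> ty h = Some (a, b) \<Longrightarrow>
   f \<odot> (g \<boxplus> h) = f \<odot> g \<boxplus> f \<odot> h"
  by transfer (rule axR[OF ax.cmp_pls_r], auto)

lemma csl: "sm r f \<odot> g = sm r (f \<odot> g)"
  by transfer (rule axR[OF ax.cmp_sm_l], auto)

lemma csr: "f \<odot> sm r g = sm r (f \<odot> g)"
  by transfer (rule axR[OF ax.cmp_sm_r], auto)

lemma tpl: "ty f = Some (a, b) \<Longrightarrow> ty g = Some (a, b) \<Longrightarrow> ty h \<noteq> None \<Longrightarrow>
   (f \<boxplus> g) \<otimes> h = f \<otimes> h \<boxplus> g \<otimes> h"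
  by transfer (rule axR[OF ax.tns_pls_l], auto)

lemma tpr: "ty g = Some (a, b) \<Longrightarrow> ty h = Some (a, b) \<Longrightarrow> ty f \<noteq> None \<Longrightarrow>
   f \<otimes> (g \<boxplus> h) = f \<otimes> g \<boxplus> f \<otimes> h"
  by transfer (rule axR[OF ax.tns_pls_r], auto)

lemma tsl: "sm r f \<otimes> g = sm r (f \<otimes> g)"
  by transfer (rule axR[OF ax.tns_sm_l], auto)

lemma tsr: "f \<otimes> sm r g = sm r (f \<otimes> g)"
  by transfer (rule axR[OF ax.tns_sm_r], auto)

lemma sm0: "ty a = Some (x, y) \<Longrightarrow> sm 0 a = zr x y"
proof -
  assume h: "ty a = Some (x, y)"
  have "sm 0 a = sm (1 + -1) a" by simp
  also have "\<dots> = a \<boxplus> sm (-1) a" by (subst smdistr) simp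
  also have "\<dots> = zr x y" using h by (rule pneg)
  finally show ?thesis .
qed

lemma zr_cmp: "ty f = Some (x, y) \<Longrightarrow> zr y z \<odot> f = zr x z"
proof -
  assume h: "ty f = Some (x, y)"
  have "zr y z \<odot> f = sm 0 (zr y z) \<odot> f" by (simp add: sm0)
  also have "\<dots> = sm 0 (zr y z \<odot> f)" by (rule csl)
  also have "\<dots> = zr x z" using h by (simp add: sm0)
  finally show ?thesis .
qed

lemma cmp_zr: "ty f = Some (y, z) \<Longrightarrow> f \<odot> zr x y = zr x z"
proof -
  assume h: "ty f = Some (y, z)"
  have "f \<odot> zr x y = f \<odot> sm 0 (zr x y)" by (simp add: sm0)
  also have "\<dots> = sm 0 (f \<odot> zr x y)" by (rule csr)
  also have "\<dots> = zr x z" using h by (simp add: sm0)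
  finally show ?thesis .
qed

lemma zr_tns: "ty g = Some (c, d) \<Longrightarrow> zr a b \<otimes> g = zr (a @ c) (b @ d)"
proof -
  assume h: "ty g = Some (c, d)"
  have "zr a b \<otimes> g = sm 0 (zr a b) \<otimes> g" by (simp add: sm0)
  also have "\<dots> = sm 0 (zr a b \<otimes> g)" by (rule tsl)
  also have "\<dots> = zr (a @ c) (b @ d)" using h by (simp add: sm0)
  finally show ?thesis .
qed

lemma tns_zr: "ty g = Some (c, d) \<Longrightarrow> g \<otimes> zr a b = zr (c @ a) (d @ b)"
proof -
  assume h: "ty g = Some (c, d)"
  have "g \<otimes> zr a b = g \<otimes> sm 0 (zr a b)" by (simp add: sm0)
  also have "\<dots> = sm 0 (g \<otimes> zr a b)" by (rule tsr)
  also have "\<dots> = zr (c @ a) (d @ b)" using h by (simp add: sm0)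
  finally show ?thesis .
qed

lemma zr_pls: "ty a = Some (x, y) \<Longrightarrow> zr x y \<boxplus> a = a"
  by (simp add: pcomm pzero)

definition w :: "sgn list \<Rightarrow> 'k::comm_ring_1 mor \<Rightarrow> sgn list \<Rightarrow> 'k mor" where
  "w l f r = idm l \<otimes> f \<otimes> idm r"

lemma ty_w[simp]: "ty (w l f r) = (case ty f of Some (a, b) \<Rightarrow> Some (l @ a @ r, l @ b @ r) | None \<Rightarrow> None)"
  unfolding w_def by (simp split: option.splits)

lemma W0[simp]: "w [] f [] = f" by (simp add: w_def)

lemma Wnest: "w l (w l' f r') r = w (l @ l') f (r' @ r)"
  unfolding w_def by (simp add: tassoc tid[symmetric])

lemma WtR: "w l (f \<otimes> idm m) r = w l f (m @ r)"
  unfolding w_def by (simp add: tassoc tid[symmetric])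

lemma WtL: "w l (idm m \<otimes> f) r = w (l @ m) f r"
  unfolding w_def by (simp add: tassoc tid[symmetric])

lemma Wid: "w l (idm a) r = idm (l @ a @ r)"
  unfolding w_def by (simp add: tid)

lemma Wcomp: "ty f = Some (b, c) \<Longrightarrow> ty g = Some (a, b) \<Longrightarrow> w l f r \<odot> w l g r = w l (f \<odot> g) r"
  unfolding w_def by (simp add: inter idl)

lemma Wsm: "w l (sm c f) r = sm c (w l f r)"
  unfolding w_def by (simp add: tsl tsr)

lemma Wpls: "ty f = Some (a, b) \<Longrightarrow> ty g = Some (a, b) \<Longrightarrow> w l (f \<boxplus> g) r = w l f r \<boxplus> w l g r"
  unfolding w_def by (simp add: tpl tpr)

lemma Wzr: "w l (zr a b) r = zr (l @ a @ r) (l @ b @ r)"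
  unfolding w_def by (simp add: zr_tns tns_zr)

lemma K1: "ty f = Some (a, b) \<Longrightarrow> ty g = Some (c, d) \<Longrightarrow>
  (f \<otimes> idm m \<otimes> idm d) \<odot> (idm a \<otimes> idm m \<otimes> g) = f \<otimes> idm m \<otimes> g"
  by (simp add: inter idl idr)

lemma K2: "ty f = Some (a, b) \<Longrightarrow> ty g = Some (c, d) \<Longrightarrow>
  (idm b \<otimes> idm m \<otimes> g) \<odot> (f \<otimes> idm m \<otimes> idm c) = f \<otimes> idm m \<otimes> g"
  by (simp add: inter idl idr)

lemma FC: "ty f = Some (a, b) \<Longrightarrow> ty g = Some (c, d) \<Longrightarrow>
  w l f (m @ d @ r) \<odot> w (l @ a @ m) g r = w (l @ b @ m) g r \<odot> w l f (m @ c @ r)"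
proof -
  assume hf: "ty f = Some (a, b)" and hg: "ty g = Some (c, d)"
  have e1: "w l f (m @ d @ r) = w l (f \<otimes> idm m \<otimes> idm d) r"
    by (simp add: tid WtR)
  have e2: "w (l @ a @ m) g r = w l (idm a \<otimes> idm m \<otimes> g) r"
    by (simp add: tassoc[symmetric] tid WtL)
  have e3: "w (l @ b @ m) g r = w l (idm b \<otimes> idm m \<otimes> g) r"
    by (simp add: tassoc[symmetric] tid WtL)
  have e4: "w l f (m @ c @ r) = w l (f \<otimes> idm m \<otimes> idm c) r"
    by (simp add: tid WtR)
  show ?thesis unfolding e1 e2 e3 e4 using hf hg
    by (simp add: Wcomp K1 K2)
qed

lemma junk: "ty u = None \<Longrightarrow> ty v = None \<Longrightarrow> u = v"
  by transfer (simp add: R_def)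

lemma WcompU: "w l f r \<odot> w l g r = w l (f \<odot> g) r"
proof (cases "ty f = None \<or> ty g = None \<or> fst (the (ty f)) \<noteq> snd (the (ty g))")
  case True
  then show ?thesis by (intro junk) (auto split: option.splits)
next
  case False
  then obtain a b c where "ty f = Some (b, c)" "ty g = Some (a, b)"
    by (cases "ty f"; cases "ty g") auto
  then show ?thesis by (rule Wcomp)
qed

lemma cx: "a \<odot> b = c \<Longrightarrow> a \<odot> (b \<odot> e) = c \<odot> e"
  by (simp add: cassoc[symmetric])

lemma idl': "ty f \<noteq> None \<Longrightarrow> snd (the (ty f)) = y \<Longrightarrow> idm y \<odot> f = f"
  by (cases "ty f") (auto intro: idl)

lemma idr': "ty f \<noteq> None \<Longrightarrow> fst (the (ty f)) = x \<Longrightarrow> f \<odot> idm x = f"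
  by (cases "ty f") (auto intro: idr)

lemma cpl': "ty f \<noteq> None \<Longrightarrow> ty g = ty f \<Longrightarrow> ty h \<noteq> None \<Longrightarrow> snd (the (ty h)) = fst (the (ty f)) \<Longrightarrow>
   (f \<boxplus> g) \<odot> h = f \<odot> h \<boxplus> g \<odot> h"
  by (cases "ty f"; cases "ty h") (auto intro: cpl)

lemma cpr': "ty f \<noteq> None \<Longrightarrow> ty g \<noteq> None \<Longrightarrow> ty h = ty g \<Longrightarrow> snd (the (ty g)) = fst (the (ty f)) \<Longrightarrow>
   f \<odot> (g \<boxplus> h) = f \<odot> g \<boxplus> f \<odot> h"
  by (cases "ty f"; cases "ty g") (auto intro: cpr)

lemma Wpls': "ty f \<noteq> None \<Longrightarrow> ty g = ty f \<Longrightarrow> w l (f \<boxplus> g) r = w l f r \<boxplus> w l g r"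
  by (cases "ty f") (auto intro: Wpls)

abbreviation "P \<equiv> Pos"
abbreviation "N \<equiv> Neg"
abbreviation XX :: "'k::comm_ring_1 mor" where "XX \<equiv> abs_mor Xg"
abbreviation cPM :: "'k::comm_ring_1 mor" where "cPM \<equiv> abs_mor CupPM"
abbreviation cMP :: "'k::comm_ring_1 mor" where "cMP \<equiv> abs_mor CupMP"
abbreviation kPM :: "'k::comm_ring_1 mor" where "kPM \<equiv> abs_mor CapPM"
abbreviation kMP :: "'k::comm_ring_1 mor" where "kMP \<equiv> abs_mor CapMP"
abbreviation YY :: "'k::comm_ring_1 mor" where "YY \<equiv> abs_mor Yg"
abbreviation YP :: "'k::comm_ring_1 mor" where "YP \<equiv> abs_mor Yg'"
abbreviation xx :: "'k::comm_ring_1 mor" where "xx \<equiv> abs_mor dot"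
abbreviation dm :: "nat \<Rightarrow> 'k::comm_ring_1 mor" where "dm n \<equiv> abs_mor (dotpow n)"

lemma mty_dot[simp]: "mty dot = Some ([P], [P])" by (simp add: dot_def)
lemma mty_dotpow[simp]: "mty (dotpow n) = Some ([P], [P])" by (induct n) auto
lemma mty_Y[simp]: "mty Yg = Some ([P,N], [N,P])" by (simp add: Yg_def rotL_def)
lemma mty_YP[simp]: "mty Yg' = Some ([N,P], [P,N])" by (simp add: Yg'_def rotR_def)

lemma x_w: "xx = w [P] kPM [] \<odot> w [] XX [N] \<odot> w [P] cPM []"
  by (simp add: dot_def abs_push w_def)
lemma Y_w: "YY = w [N,P] kPM [] \<odot> w [N] XX [N] \<odot> w [] cMP [P,N]"
  by (simp add: Yg_def rotL_def abs_push w_def tassoc)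
lemma YP_w: "YP = w [] kMP [P,N] \<odot> w [N] XX [N] \<odot> w [N,P] cPM []"
  by (simp add: Yg'_def rotR_def abs_push w_def tassoc)
lemma dm0: "dm 0 = idm [P]" by (simp add: abs_push)
lemma dmS: "dm (Suc n) = xx \<odot> dm n" by (simp add: abs_push)
lemma dmS': "dm (Suc n) = dm n \<odot> (xx :: 'k::comm_ring_1 mor)"
proof (induct n)
  case 0 then show ?case by (simp add: abs_push idl' idr')
next
  case (Suc n)
  have "dm (Suc (Suc n)) = xx \<odot> dm (Suc n)" by (rule dmS)
  also have "\<dots> = xx \<odot> (dm n \<odot> (xx :: 'k mor))" using Suc.hyps by (rule arg_cong)
  also have "\<dots> = (xx \<odot> dm n) \<odot> xx" by (simp only: cassoc)
  also have "\<dots> = dm (Suc n) \<odot> xx" by (simp only: dmS)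
  finally show ?case .
qed

lemma ccw_w: "abs_mor (ccw n) = kMP \<odot> w [N] (dm n) [] \<odot> cMP"
  by (simp add: ccw_def abs_push w_def)
lemma cw_w: "abs_mor (cw n) = kPM \<odot> w [] (dm n) [N] \<odot> cPM"
  by (simp add: cw_def abs_push w_def)

lemma zz1: "w [] kPM [P] \<odot> w [P] cMP [] = idm [P]"
proof -
  have "abs_mor (Cmp (Tns CapPM (Id [Pos])) (Tns (Id [Pos]) CupMP)) = abs_mor (Id [Pos])"
    by (rule axE[OF ax.zz1]) simp
  then show ?thesis by (simp add: abs_push w_def)
qed

lemma zz2: "w [P] kMP [] \<odot> w [] cPM [P] = idm [P]"
proof -
  have "abs_mor (Cmp (Tns (Id [Pos]) CapMP) (Tns CupPM (Id [Pos]))) = abs_mor (Id [Pos])"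
    by (rule axE[OF ax.zz2]) simp
  then show ?thesis by (simp add: abs_push w_def)
qed

lemma Xsq: "XX \<odot> XX = idm [P,P]"
proof -
  have "abs_mor (Cmp Xg Xg) = abs_mor (Id [Pos,Pos])"
    by (rule axE[OF ax.X_sq]) simp
  then show ?thesis by (simp add: abs_push)
qed

lemma braid: "w [] XX [P] \<odot> w [P] XX [] \<odot> w [] XX [P] = w [P] XX [] \<odot> w [] XX [P] \<odot> w [P] XX []"
proof -
  have "abs_mor (Cmp (Tns Xg (Id [Pos])) (Cmp (Tns (Id [Pos]) Xg) (Tns Xg (Id [Pos]))))
      = abs_mor (Cmp (Tns (Id [Pos]) Xg) (Cmp (Tns Xg (Id [Pos])) (Tns (Id [Pos]) Xg)))"
    by (rule axE[OF ax.braid]) simp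
  then show ?thesis by (simp add: abs_push w_def)
qed

lemma YY2: "YY \<odot> YP = idm [N,P] \<boxplus> sm (-1) (cMP \<odot> kMP)"
proof -
  have "abs_mor (Cmp Yg Yg') = abs_mor (Pls (Id [Neg,Pos]) (Sm (-1) (Cmp CupMP CapMP)))"
    by (rule axE[OF ax.YY2]) simp
  then show ?thesis by (simp add: abs_push)
qed

lemma lcurl: "w [] kMP [P] \<odot> w [N] XX [] \<odot> w [] cMP [P] = zr [P] [P]"
proof -
  have "abs_mor (Cmp (Tns CapMP (Id [Pos])) (Cmp (Tns (Id [Neg]) Xg) (Tns CupMP (Id [Pos]))))
      = abs_mor (Zr [Pos] [Pos])"
    by (rule axE[OF ax.left_curl]) simp
  then show ?thesis by (simp add: abs_push w_def)
qed

lemma cx3: "a \<odot> b \<odot> c = d \<Longrightarrow> a \<odot> (b \<odot> (c \<odot> e)) = d \<odot> e"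
  by (simp add: cassoc[symmetric])

lemma Wcong: "a = b \<Longrightarrow> w l a r = w l b r" by simp

lemma YYid: "(idm [N,P] :: 'k::comm_ring_1 mor) = YY \<odot> YP \<boxplus> cMP \<odot> kMP"
proof -
  have "(YY :: 'k mor) \<odot> YP \<boxplus> cMP \<odot> kMP = (idm [N,P] \<boxplus> sm (-1) (cMP \<odot> kMP)) \<boxplus> cMP \<odot> kMP"
    by (simp only: YY2)
  also have "\<dots> = idm [N,P] \<boxplus> (cMP \<odot> kMP \<boxplus> sm (-1) (cMP \<odot> kMP))"
    by (simp only: passoc pcomm[of "sm (-1) (cMP \<odot> kMP)"])
  also have "\<dots> = idm [N,P] \<boxplus> zr [N,P] [N,P]"
    by (subst pneg) simp_all
  also have "\<dots> = idm [N,P]" by (simp add: pzero)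
  finally show ?thesis by simp
qed

lemma A1: "w [P] (YP :: 'k::comm_ring_1 mor) [] \<odot> w [] cPM [P] = w [] XX [N] \<odot> w [P] cPM []"
proof -
  have s1: "w [P,N,P] (cPM :: 'k mor) [] \<odot> w [] cPM [P] = w [] cPM [P,P,N] \<odot> w [P] cPM []"
    using FC[where f="cPM :: 'k mor" and a="[]" and b="[P,N]" and g=cPM and c="[]" and d="[P,N]" and l="[]" and m="[P]" and r="[]"] by simp
  have s2: "w [P,N] (XX :: 'k mor) [N] \<odot> w [] cPM [P,P,N] = w [] cPM [P,P,N] \<odot> w [] XX [N]"
    using FC[where f="cPM :: 'k mor" and a="[]" and b="[P,N]" and g=XX and c="[P,P]" and d="[P,P]" and l="[]" and m="[]" and r="[N]"] by simp
  have s3: "w [P] (kMP :: 'k mor) [P,N] \<odot> w [] cPM [P,P,N] = idm [P,P,N]"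
    using Wcong[OF zz2, where l="[]" and r="[P,N]"] by (simp add: WcompU[symmetric] Wnest Wid)
  have "w [P] (YP :: 'k mor) [] \<odot> w [] cPM [P] = w [P] kMP [P,N] \<odot> w [P,N] XX [N] \<odot> w [P,N,P] cPM [] \<odot> w [] cPM [P]"
    by (simp add: YP_w WcompU[symmetric] Wnest cassoc)
  also have "\<dots> = w [P] kMP [P,N] \<odot> w [P,N] XX [N] \<odot> w [] cPM [P,P,N] \<odot> w [P] cPM []"
    by (simp only: s1)
  also have "\<dots> = w [P] kMP [P,N] \<odot> w [] cPM [P,P,N] \<odot> w [] XX [N] \<odot> w [P] cPM []"
    by (simp only: cassoc cx[OF s2])
  also have "\<dots> = w [] XX [N] \<odot> w [P] cPM []"
    by (simp add: cx[OF s3] idl')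
  finally show ?thesis .
qed

lemma PT0: "w [] (cPM :: 'k::comm_ring_1 mor) [P] = w [P] YY [] \<odot> w [] XX [N] \<odot> w [P] cPM [] \<boxplus> w [P] cMP []"
proof -
  have "w [] (cPM :: 'k mor) [P] = w [P] (idm [N,P]) [] \<odot> w [] cPM [P]" by (simp add: Wid idl')
  also have "\<dots> = w [P] (YY \<odot> YP \<boxplus> cMP \<odot> kMP) [] \<odot> w [] cPM [P]" by (simp only: YYid[symmetric])
  also have "\<dots> = (w [P] (YY \<odot> YP) [] \<boxplus> w [P] (cMP \<odot> kMP) []) \<odot> w [] cPM [P]" by (simp add: Wpls')
  also have "\<dots> = w [P] (YY \<odot> YP) [] \<odot> w [] cPM [P] \<boxplus> w [P] (cMP \<odot> kMP) [] \<odot> w [] cPM [P]"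
    by (simp add: cpl')
  also have "\<dots> = w [P] YY [] \<odot> w [P] YP [] \<odot> w [] cPM [P] \<boxplus> w [P] cMP [] \<odot> w [P] kMP [] \<odot> w [] cPM [P]"
    by (simp add: WcompU[symmetric] cassoc)
  also have "\<dots> = w [P] YY [] \<odot> w [] XX [N] \<odot> w [P] cPM [] \<boxplus> w [P] cMP []"
    by (simp add: A1 zz2 idr')
  finally show ?thesis .
qed

lemma CY: "w [] (kPM :: 'k::comm_ring_1 mor) [P] \<odot> w [P] YY [] = w [P] kPM [] \<odot> w [] XX [N]"
proof -
  have sa: "w [] (kPM :: 'k mor) [P] \<odot> w [P,N,P] kPM [] = w [P] kPM [] \<odot> w [] kPM [P,P,N]"
    using FC[where f="kPM :: 'k mor" and a="[P,N]" and b="[]" and g=kPM and c="[P,N]" and d="[]" and l="[]" and m="[P]" and r="[]"] by simp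
  have sb: "w [] (kPM :: 'k mor) [P,P,N] \<odot> w [P,N] XX [N] = w [] XX [N] \<odot> w [] kPM [P,P,N]"
    using FC[where f="kPM :: 'k mor" and a="[P,N]" and b="[]" and g=XX and c="[P,P]" and d="[P,P]" and l="[]" and m="[]" and r="[N]"] by simp
  have sc: "w [] (kPM :: 'k mor) [P,P,N] \<odot> w [P] cMP [P,N] = idm [P,P,N]"
    using Wcong[OF zz1, where l="[]" and r="[P,N]"] by (simp add: WcompU[symmetric] Wnest Wid)
  have "w [] (kPM :: 'k mor) [P] \<odot> w [P] YY [] = w [] kPM [P] \<odot> w [P,N,P] kPM [] \<odot> w [P,N] XX [N] \<odot> w [P] cMP [P,N]"
    by (simp add: Y_w WcompU[symmetric] Wnest cassoc)
  also have "\<dots> = w [P] kPM [] \<odot> w [] kPM [P,P,N] \<odot> w [P,N] XX [N] \<odot> w [P] cMP [P,N]"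
    by (simp only: cassoc cx[OF sa])
  also have "\<dots> = w [P] kPM [] \<odot> w [] XX [N] \<odot> w [] kPM [P,P,N] \<odot> w [P] cMP [P,N]"
    by (simp only: cassoc cx[OF sb])
  also have "\<dots> = w [P] kPM [] \<odot> w [] XX [N]"
    by (simp add: sc idr')
  finally show ?thesis .
qed

lemma DS: "w [] (xx :: 'k::comm_ring_1 mor) [P] \<odot> XX = XX \<odot> w [P] xx [] \<boxplus> idm [P,P]"
proof -
  define T :: "'k mor" where "T = w [P] kPM [P] \<odot> w [] XX [N,P] \<odot> w [P,P] YY [] \<odot> w [P] XX [N] \<odot> w [P,P] cPM []"
  have e2: "w [P] (cPM :: 'k mor) [P] = w [P,P] YY [] \<odot> w [P] XX [N] \<odot> w [P,P] cPM [] \<boxplus> w [P,P] cMP []"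
    using Wcong[OF PT0, where l="[P]" and r="[]"] by (simp add: Wpls' WcompU[symmetric] Wnest)
  have sS1: "w [] (XX :: 'k mor) [N,P] \<odot> w [P,P] cMP [] = w [P,P] cMP [] \<odot> XX"
    using FC[where f="XX :: 'k mor" and a="[P,P]" and b="[P,P]" and g=cMP and c="[]" and d="[N,P]" and l="[]" and m="[]" and r="[]"] by simp
  have sS2: "w [P] (kPM :: 'k mor) [P] \<odot> w [P,P] cMP [] = idm [P,P]"
    using Wcong[OF zz1, where l="[P]" and r="[]"] by (simp add: WcompU[symmetric] Wnest Wid)
  have e1: "w [] (xx :: 'k mor) [P] = T \<boxplus> XX"
  proof -
    have "w [] (xx :: 'k mor) [P] = w [P] kPM [P] \<odot> w [] XX [N,P] \<odot> w [P] cPM [P]"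
      by (simp add: x_w WcompU[symmetric] Wnest)
    also have "\<dots> = w [P] kPM [P] \<odot> w [] XX [N,P] \<odot> (w [P,P] YY [] \<odot> w [P] XX [N] \<odot> w [P,P] cPM [] \<boxplus> w [P,P] cMP [])"
      by (simp only: e2)
    also have "\<dots> = T \<boxplus> w [P] kPM [P] \<odot> w [] XX [N,P] \<odot> w [P,P] cMP []"
      unfolding T_def by (simp add: cpr')
    also have "\<dots> = T \<boxplus> XX"
      by (simp add: sS1 cx[OF sS2] idl')
    finally show ?thesis .
  qed
  have i: "w [P,P] (cPM :: 'k mor) [] \<odot> XX = w [] XX [P,N] \<odot> w [P,P] cPM []"
    using FC[where f="XX :: 'k mor" and a="[P,P]" and b="[P,P]" and g=cPM and c="[]" and d="[P,N]" and l="[]" and m="[]" and r="[]"] by simp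
  have ii: "w [] (XX :: 'k mor) [N,P] \<odot> w [P,P] YY [] = w [P,P] YY [] \<odot> w [] XX [P,N]"
    using FC[where f="XX :: 'k mor" and a="[P,P]" and b="[P,P]" and g=YY and c="[P,N]" and d="[N,P]" and l="[]" and m="[]" and r="[]"] by simp
  have iii: "w [P] (kPM :: 'k mor) [P] \<odot> w [P,P] YY [] = w [P,P] kPM [] \<odot> w [P] XX [N]"
    using Wcong[OF CY, where l="[P]" and r="[]"] by (simp add: WcompU[symmetric] Wnest)
  have iv: "w [P] (XX :: 'k mor) [N] \<odot> w [] XX [P,N] \<odot> w [P] XX [N] = w [] XX [P,N] \<odot> w [P] XX [N] \<odot> w [] XX [P,N]"
    using Wcong[OF braid[symmetric], where l="[]" and r="[N]"] by (simp add: WcompU[symmetric] Wnest)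
  have v: "w [] (XX :: 'k mor) [P,N] \<odot> w [] XX [P,N] = idm [P,P,P,N]"
    using Wcong[OF Xsq, where l="[]" and r="[P,N]"] by (simp add: WcompU[symmetric] Wnest Wid)
  have vi: "w [P,P] (kPM :: 'k mor) [] \<odot> w [] XX [P,N] = XX \<odot> w [P,P] kPM []"
    using FC[where f="XX :: 'k mor" and a="[P,P]" and b="[P,P]" and g=kPM and c="[P,N]" and d="[]" and l="[]" and m="[]" and r="[]"] by simp
  have vii: "w [P,P] (kPM :: 'k mor) [] \<odot> w [P] XX [N] \<odot> w [P,P] cPM [] = w [P] xx []"
    by (simp add: x_w WcompU[symmetric] Wnest)
  have TX: "T \<odot> XX = XX \<odot> w [P] xx []"
  proof -
    have "T \<odot> XX = w [P] kPM [P] \<odot> w [] XX [N,P] \<odot> w [P,P] YY [] \<odot> w [P] XX [N] \<odot> w [P,P] cPM [] \<odot> XX"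
      unfolding T_def by (simp only: cassoc)
    also have "\<dots> = w [P] kPM [P] \<odot> w [] XX [N,P] \<odot> w [P,P] YY [] \<odot> w [P] XX [N] \<odot> w [] XX [P,N] \<odot> w [P,P] cPM []"
      by (simp only: i)
    also have "\<dots> = w [P] kPM [P] \<odot> w [P,P] YY [] \<odot> w [] XX [P,N] \<odot> w [P] XX [N] \<odot> w [] XX [P,N] \<odot> w [P,P] cPM []"
      by (simp only: cassoc cx[OF ii])
    also have "\<dots> = w [P,P] kPM [] \<odot> w [P] XX [N] \<odot> w [] XX [P,N] \<odot> w [P] XX [N] \<odot> w [] XX [P,N] \<odot> w [P,P] cPM []"
      by (simp only: cassoc cx[OF iii])
    also have "\<dots> = w [P,P] kPM [] \<odot> w [] XX [P,N] \<odot> w [P] XX [N] \<odot> w [] XX [P,N] \<odot> w [] XX [P,N] \<odot> w [P,P] cPM []"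
      by (simp only: cassoc cx3[OF iv])
    also have "\<dots> = w [P,P] kPM [] \<odot> w [] XX [P,N] \<odot> w [P] XX [N] \<odot> w [P,P] cPM []"
      by (simp add: cx[OF v] idl')
    also have "\<dots> = XX \<odot> w [P,P] kPM [] \<odot> w [P] XX [N] \<odot> w [P,P] cPM []"
      by (simp only: cassoc cx[OF vi])
    also have "\<dots> = XX \<odot> w [P] xx []"
      by (simp only: vii)
    finally show ?thesis .
  qed
  have "w [] (xx :: 'k mor) [P] \<odot> XX = (T \<boxplus> XX) \<odot> XX" by (simp only: e1)
  also have "\<dots> = T \<odot> XX \<boxplus> XX \<odot> XX" by (rule cpl') (simp_all add: T_def)
  also have "\<dots> = XX \<odot> w [P] xx [] \<boxplus> idm [P,P]" by (simp only: TX Xsq)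
  finally show ?thesis .
qed

lemma mty_cw[simp]: "mty (cw n) = Some ([], [])" by (simp add: cw_def)
lemma mty_ccw[simp]: "mty (ccw n) = Some ([], [])" by (simp add: ccw_def)

definition G :: "nat \<Rightarrow> 'k::comm_ring_1 mor" where
  "G b = w [P] kPM [] \<odot> w [] XX [N] \<odot> w [P] (dm b) [N] \<odot> w [P] cPM []"

lemma ty_G[simp]: "ty (G b) = Some ([P], [P])" by (simp add: G_def)

definition PP :: "nat \<Rightarrow> nat \<Rightarrow> 'k::comm_ring_1 mor" where
  "PP a b = kMP \<odot> w [N] (dm a \<odot> G b) [] \<odot> cMP"

lemma G0: "G 0 = xx"
  by (simp add: G_def x_w abs_push Wid idl')

lemma S3: "(xx :: 'k::comm_ring_1 mor) \<odot> G b = G (Suc b) \<boxplus> w [P] (abs_mor (cw b)) []"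
proof -
  have a: "(xx :: 'k mor) \<odot> w [P] kPM [] = w [P] kPM [] \<odot> w [] xx [P,N]"
    using FC[where f="xx :: 'k mor" and a="[P]" and b="[P]" and g=kPM and c="[P,N]" and d="[]" and l="[]" and m="[]" and r="[]"] by simp
  have b: "w [] (xx :: 'k mor) [P,N] \<odot> w [] XX [N] = w [] XX [N] \<odot> w [P] xx [N] \<boxplus> idm [P,P,N]"
    using Wcong[OF DS[where 'k='k], where l="[]" and r="[N]"] by (simp add: Wpls' WcompU[symmetric] Wnest Wid)
  have "(xx :: 'k mor) \<odot> G b = w [P] kPM [] \<odot> w [] xx [P,N] \<odot> w [] XX [N] \<odot> w [P] (dm b) [N] \<odot> w [P] cPM []"
    unfolding G_def by (simp only: cassoc cx[OF a])
  also have "\<dots> = w [P] kPM [] \<odot> (w [] XX [N] \<odot> w [P] xx [N] \<boxplus> idm [P,P,N]) \<odot> w [P] (dm b) [N] \<odot> w [P] cPM []"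
    by (simp only: cassoc cx[OF b])
  also have "\<dots> = w [P] kPM [] \<odot> w [] XX [N] \<odot> w [P] xx [N] \<odot> w [P] (dm b) [N] \<odot> w [P] cPM []
      \<boxplus> w [P] kPM [] \<odot> idm [P,P,N] \<odot> w [P] (dm b) [N] \<odot> w [P] cPM []"
    by (simp add: cpl' cpr' cassoc)
  also have "\<dots> = G (Suc b) \<boxplus> w [P] (abs_mor (cw b)) []"
    by (simp add: G_def cw_w WcompU[symmetric] Wnest abs_push cassoc idl')
  finally show ?thesis .
qed

lemma S4: "PP (Suc a) b = PP a (Suc b) \<boxplus> abs_mor (ccw a) \<odot> (abs_mor (cw b) :: 'k::comm_ring_1 mor)"
proof -
  let ?c = "abs_mor (cw b) :: 'k mor"
  have f: "w [N,P] ?c [] \<odot> cMP = cMP \<odot> ?c"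
    using FC[where f="cMP :: 'k mor" and a="[]" and b="[N,P]" and g="?c" and c="[]" and d="[]" and l="[]" and m="[]" and r="[]"] by simp
  have "(PP (Suc a) b :: 'k mor) = kMP \<odot> w [N] (dm a \<odot> (xx \<odot> G b)) [] \<odot> cMP"
    unfolding PP_def by (simp only: dmS' cassoc)
  also have "\<dots> = kMP \<odot> w [N] (dm a \<odot> (G (Suc b) \<boxplus> w [P] ?c [])) [] \<odot> cMP"
    by (simp only: S3)
  also have "\<dots> = kMP \<odot> (w [N] (dm a \<odot> G (Suc b)) [] \<boxplus> w [N] (dm a \<odot> w [P] ?c []) []) \<odot> cMP"
    by (simp add: cpr' Wpls' del: dotpow.simps)
  also have "\<dots> = PP a (Suc b) \<boxplus> kMP \<odot> w [N] (dm a \<odot> w [P] ?c []) [] \<odot> cMP"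
    unfolding PP_def by (simp add: cpl' cpr' del: dotpow.simps)
  also have "kMP \<odot> w [N] (dm a \<odot> w [P] ?c []) [] \<odot> cMP = kMP \<odot> w [N] (dm a) [] \<odot> w [N,P] ?c [] \<odot> cMP"
    by (simp add: WcompU[symmetric] Wnest cassoc del: dotpow.simps)
  also have "\<dots> = abs_mor (ccw a) \<odot> ?c"
    by (simp add: f ccw_w cassoc del: dotpow.simps)
  finally show ?thesis .
qed

lemma S5: "PP 0 b = (zr [] [] :: 'k::comm_ring_1 mor)"
proof -
  have f1: "(kMP :: 'k mor) \<odot> w [N,P] kPM [] = kPM \<odot> w [] kMP [P,N]"
    using FC[where f="kMP :: 'k mor" and a="[N,P]" and b="[]" and g=kPM and c="[P,N]" and d="[]" and l="[]" and m="[]" and r="[]"] by simp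
  have f2: "w [N,P] (cPM :: 'k mor) [] \<odot> cMP = w [] cMP [P,N] \<odot> cPM"
    using FC[where f="cMP :: 'k mor" and a="[]" and b="[N,P]" and g=cPM and c="[]" and d="[P,N]" and l="[]" and m="[]" and r="[]"] by simp
  have f3: "w [N,P] (dm b :: 'k mor) [N] \<odot> w [] cMP [P,N] = w [] cMP [P,N] \<odot> w [] (dm b) [N]"
    using FC[where f="cMP :: 'k mor" and a="[]" and b="[N,P]" and g="dm b" and c="[P]" and d="[P]" and l="[]" and m="[]" and r="[N]"] by (simp del: dotpow.simps)
  have f4: "w [] (kMP :: 'k mor) [P,N] \<odot> w [N] XX [N] \<odot> w [] cMP [P,N] = zr [P,N] [P,N]"
    using Wcong[OF lcurl[where 'a='k], where l="[]" and r="[N]"] by (simp add: WcompU[symmetric] Wnest Wzr)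
  have "(PP 0 b :: 'k mor) = kMP \<odot> w [N,P] kPM [] \<odot> w [N] XX [N] \<odot> w [N,P] (dm b) [N] \<odot> w [N,P] cPM [] \<odot> cMP"
    unfolding PP_def G_def by (simp add: dm0 Wid abs_push idl' WcompU[symmetric] Wnest cassoc del: dotpow.simps)
  also have "\<dots> = kPM \<odot> w [] kMP [P,N] \<odot> w [N] XX [N] \<odot> w [] cMP [P,N] \<odot> w [] (dm b) [N] \<odot> cPM"
    by (simp only: cassoc f2 cx[OF f3] cx[OF f1])
  also have "\<dots> = zr [] []"
    by (simp add: cx3[OF f4] zr_cmp cmp_zr del: dotpow.simps)
  finally show ?thesis .
qed

lemma foldr_shift: "foldr (\<boxplus>) L (A \<boxplus> t) = t \<boxplus> foldr (\<boxplus>) L (A :: 'k::comm_ring_1 mor)"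
proof (induct L)
  case Nil then show ?case by (simp add: pcomm)
next
  case (Cons l L)
  have "foldr (\<boxplus>) (l # L) (A \<boxplus> t) = l \<boxplus> (t \<boxplus> foldr (\<boxplus>) L A)" using Cons by simp
  also have "\<dots> = t \<boxplus> (l \<boxplus> foldr (\<boxplus>) L A)" by (metis passoc pcomm)
  finally show ?case by simp
qed

lemma P_k0: "PP k 0 = (abs_mor (ccw (Suc k)) :: 'k::comm_ring_1 mor)"
  unfolding PP_def ccw_w G0 by (simp only: dmS')

lemma inv:
  fixes k :: nat
  defines "F \<equiv> (\<lambda>a. abs_mor (ccw a) \<odot> (abs_mor (cw (k - 1 - a)) :: 'k::comm_ring_1 mor))"
  shows "j \<le> k \<Longrightarrow> abs_mor (ccw (Suc k)) = foldr (\<boxplus>) (map F [k - j..<k]) (PP (k - j) j)"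
proof (induct j)
  case 0 then show ?case by (simp add: P_k0)
next
  case (Suc j)
  define a where "a = k - Suc j"
  have ka: "k - j = Suc a" using Suc.prems unfolding a_def by simp
  have kb: "k - 1 - a = j" using Suc.prems unfolding a_def by simp
  have L: "[k - Suc j..<k] = a # [k - j..<k]" using Suc.prems unfolding a_def
    by (simp add: upt_conv_Cons Suc_diff_Suc)
  have "abs_mor (ccw (Suc k)) = foldr (\<boxplus>) (map F [k - j..<k]) (PP (Suc a) j)"
    using Suc ka by simp
  also have "\<dots> = foldr (\<boxplus>) (map F [k - j..<k]) (PP a (Suc j) \<boxplus> F a)"
    by (simp only: S4 F_def kb)
  also have "\<dots> = F a \<boxplus> foldr (\<boxplus>) (map F [k - j..<k]) (PP a (Suc j))"
    by (rule foldr_shift)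
  also have "\<dots> = foldr (\<boxplus>) (map F [k - Suc j..<k]) (PP (k - Suc j) (Suc j))"
    unfolding L a_def by simp
  finally show ?case .
qed

lemma abs_tsum: "abs_mor (tsum a b L) = foldr (\<boxplus>) (map abs_mor L) (zr a b)"
  unfolding tsum_def by (induct L) (simp_all add: abs_push)

theorem proposition2:
  fixes k :: nat
  assumes "k \<ge> 1"
  shows "heq (ccw (k + 1) :: 'k::comm_ring_1 tm)
             (tsum [] [] (map (\<lambda>a. Cmp (ccw a) (cw (k - 1 - a))) [0..<k]))"
proof -
  have "abs_mor (ccw (Suc k)) = foldr (\<boxplus>) (map (\<lambda>a. abs_mor (ccw a) \<odot> (abs_mor (cw (k - 1 - a)) :: 'k mor)) [k - k..<k]) (PP (k - k) k)"
    by (rule inv) simp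
  also have "\<dots> = abs_mor (tsum [] [] (map (\<lambda>a. Cmp (ccw a) (cw (k - 1 - a))) [0..<k]))"
    by (simp add: S5 abs_tsum abs_push o_def del: dotpow.simps)
  finally have "R (ccw (k + 1) :: 'k tm) (tsum [] [] (map (\<lambda>a. Cmp (ccw a) (cw (k - 1 - a))) [0..<k]))"
    unfolding mor.abs_eq_iff[symmetric] by simp
  then show ?thesis unfolding R_def by simp
qed

end
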